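(* For all $n\ge 0$ and $k\ge 0$: if $k\equiv 0$ or $3\pmod 4$ then $L(n,k)=e(n,k)$, and if $k\equiv 1$ or $2\pmod 4$ then $L(n,k)=o(n,k)$.
   Context: $e(n,k)$ (resp. $o(n,k)$) is the number of $k$-element subsets of $\{1,\dots,n\}$ whose sum of elements is even (resp. odd); the empty set counts as even. Losanitsch's triangle $(L(n,k))_{n,k\ge 0}$ is defined by $L(0,k)=[k=0]$, $L(1,k)=[k\le 1]$ for $k\ge0$, $L(n,k)=0$ for $k<0$, and for $n\ge 2$ and all $k$: $L(n,k)=L(n-2,k)+\binom{n-2}{k-1}+L(n-2,k-2)$, where $\binom{m}{j}=0$ for $j<0$ or $j>m$. *)

theory Defs
  imports Main
begin

definition binom_int :: "nat \<Rightarrow> int \<Rightarrow> nat" where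
  "binom_int m j = (if j < 0 then 0 else m choose (nat j))"

fun L :: "nat \<Rightarrow> int \<Rightarrow> nat" where
  "L 0 k = (if k = 0 then 1 else 0)"
| "L (Suc 0) k = (if 0 \<le> k \<and> k \<le> 1 then 1 else 0)"
| "L (Suc (Suc n)) k = (if k < 0 then 0 else L n k + binom_int n (k - 1) + L n (k - 2))"

definition e_cnt :: "nat \<Rightarrow> nat \<Rightarrow> nat" where
  "e_cnt n k = card {S. S \<subseteq> {1..n} \<and> card S = k \<and> even (\<Sum>S)}"

definition o_cnt :: "nat \<Rightarrow> nat \<Rightarrow> nat" where
  "o_cnt n k = card {S. S \<subseteq> {1..n} \<and> card S = k \<and> odd (\<Sum>S)}"

end

theory Submission
  imports Defs
begin

definition cnt :: "nat \<Rightarrow> nat \<Rightarrow> bool \<Rightarrow> nat" where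
  "cnt n k b = card {S. S \<subseteq> {1..n} \<and> card S = k \<and> even (\<Sum>S) = b}"

lemma cnt_sum: "cnt n k True + cnt n k False = n choose k"
proof -
  let ?A = "{S. S \<subseteq> {1..n} \<and> card S = k \<and> even (\<Sum>S) = True}"
  let ?B = "{S. S \<subseteq> {1..n} \<and> card S = k \<and> even (\<Sum>S) = False}"
  have fin: "finite {S. S \<subseteq> {1..n} \<and> card S = k}"
    by (rule finite_subset[of _ "Pow {1..n}"]) auto
  have "?A \<union> ?B = {S. S \<subseteq> {1..n} \<and> card S = k}" by auto
  moreover have "card (?A \<union> ?B) = card ?A + card ?B"
    by (rule card_Un_disjoint) (auto intro: finite_subset[OF _ fin])
  ultimately show ?thesis unfolding cnt_def using n_subsets[of "{1..n}" k] by simp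
qed

lemma cnt_0: "cnt n 0 b = (if b then 1 else 0)"
proof -
  have "{S. S \<subseteq> {1..n} \<and> card S = 0 \<and> even (\<Sum>S) = b} = (if b then {{}} else {})"
  proof -
    have "S \<subseteq> {1..n} \<Longrightarrow> card S = 0 \<longleftrightarrow> S = {}" for S :: "nat set"
      using finite_subset[of S "{1..n}"] by auto
    then show ?thesis by (cases b) (auto, metis gr0I sum.empty even_zero)
  qed
  then show ?thesis unfolding cnt_def by simp
qed

lemma cnt_step: "cnt (Suc n) (Suc k) b = cnt n (Suc k) b + cnt n k (b = even (Suc n))"
proof -
  let ?P = "{S. S \<subseteq> {1..Suc n} \<and> card S = Suc k \<and> even (\<Sum>S) = b}"
  let ?A = "{S. S \<subseteq> {1..n} \<and> card S = Suc k \<and> even (\<Sum>S) = b}"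
  let ?C = "{S. S \<subseteq> {1..n} \<and> card S = k \<and> even (\<Sum>S) = (b = even (Suc n))}"
  have finP: "finite (Pow {1..Suc n})" by simp
  have eq: "?P = ?A \<union> insert (Suc n) ` ?C"
  proof (rule set_eqI, rule iffI)
    fix S assume S: "S \<in> ?P"
    show "S \<in> ?A \<union> insert (Suc n) ` ?C"
    proof (cases "Suc n \<in> S")
      case False
      have "S \<subseteq> {1..Suc n}" using S by simp
      then have "S \<subseteq> {1..n}" using False by (force simp: subset_iff le_Suc_eq)
      then show ?thesis using S by auto
    next
      case True
      let ?T = "S - {Suc n}"
      have T1: "?T \<subseteq> {1..n}" using S by auto
      have fT: "finite ?T" using T1 finite_subset by blast
      have ST: "S = insert (Suc n) ?T" using True by auto
      have fS: "finite S" using S finite_subset[of S "{1..Suc n}"] by simp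
      have cT: "card ?T = k" using card_Suc_Diff1[OF fS True] S by simp
      have sT: "\<Sum>S = Suc n + \<Sum>?T" using sum.remove[OF fS True, of "\<lambda>x. x"] by simp
      have "even (\<Sum>?T) = (b = even (Suc n))" using S sT by auto
      then have "?T \<in> ?C" using T1 cT by auto
      then show ?thesis using ST by blast
    qed
  next
    fix S assume S: "S \<in> ?A \<union> insert (Suc n) ` ?C"
    show "S \<in> ?P"
    proof (cases "S \<in> ?A")
      case True then show ?thesis by auto
    next
      case False
      then obtain T where T: "T \<in> ?C" "S = insert (Suc n) T" using S by blast
      have T1: "T \<subseteq> {1..n}" using T by auto
      have fT: "finite T" using T1 finite_subset by blast
      have nT: "Suc n \<notin> T" using T1 by auto
      have "card S = Suc k" using T fT nT by simp
      moreover have "\<Sum>S = Suc n + \<Sum>T" using T fT nT by simp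
      ultimately show ?thesis using T T1 by auto
    qed
  qed
  have finA: "finite ?A" by (rule finite_subset[of _ "Pow {1..n}"]) auto
  have finC: "finite ?C" by (rule finite_subset[of _ "Pow {1..n}"]) auto
  have inj: "inj_on (insert (Suc n)) ?C"
  proof (rule inj_onI)
    fix X Y assume "X \<in> ?C" "Y \<in> ?C" "insert (Suc n) X = insert (Suc n) Y"
    moreover have "Suc n \<notin> X" "Suc n \<notin> Y" using \<open>X \<in> ?C\<close> \<open>Y \<in> ?C\<close> by auto
    ultimately show "X = Y" by (metis Diff_insert_absorb)
  qed
  have disj: "?A \<inter> insert (Suc n) ` ?C = {}" by auto
  have "card ?P = card ?A + card (insert (Suc n) ` ?C)"
    unfolding eq by (rule card_Un_disjoint) (use finA finC disj in auto)
  also have "card (insert (Suc n) ` ?C) = card ?C" using inj by (rule card_image)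
  finally show ?thesis unfolding cnt_def .
qed

lemma cnt_step0: "cnt (Suc n) 0 b = cnt n 0 b" by (simp add: cnt_0)

lemma L_neg: "k < 0 \<Longrightarrow> L n k = 0"
  by (induction n k rule: L.induct) auto

definition pp :: "nat \<Rightarrow> bool" where
  "pp k = (k mod 4 = 0 \<or> k mod 4 = 3)"

lemma pp2: "pp (Suc (Suc k)) = (\<not> pp k)"
  unfolding pp_def by presburger

lemma main: "L n (int k) = cnt n k (pp k)"
proof (induction n arbitrary: k rule: less_induct)
  case (less n)
  show ?case
  proof (cases n)
    case 0
    then show ?thesis
    proof (cases k)
      case 0 then show ?thesis using \<open>n = 0\<close> by (simp add: cnt_0 pp_def)
    next
      case (Suc j)
      have "cnt 0 (Suc j) b = 0" for b unfolding cnt_def by simp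
      then show ?thesis using \<open>n = 0\<close> Suc by simp
    qed
  next
    case (Suc m)
    show ?thesis
    proof (cases m)
      case 0
      then have n1: "n = Suc 0" using Suc by simp
      show ?thesis
      proof (cases k)
        case 0 then show ?thesis using n1 by (simp add: cnt_0 pp_def)
      next
        case (Suc j)
        show ?thesis
        proof (cases j)
          case 0
          have "cnt 0 (Suc 0) b = 0" for b unfolding cnt_def by simp
          then show ?thesis using n1 Suc 0 by (simp add: cnt_step cnt_0 pp_def)
        next
          case (Suc i)
          have "cnt 0 (Suc i) b = 0" for b unfolding cnt_def by simp
          moreover have "cnt 0 (Suc (Suc i)) b = 0" for b unfolding cnt_def by simp
          ultimately show ?thesis using n1 Suc \<open>k = Suc j\<close> by (simp add: cnt_step)
        qed
      qed
    next
      case (Suc r)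
      have n2: "n = Suc (Suc r)" using \<open>n = Suc m\<close> Suc by simp
      have IH: "\<And>j. L r (int j) = cnt r j (pp j)" using less n2 by simp
      show ?thesis
      proof (cases k)
        case 0
        then show ?thesis using n2 IH[of 0] by (simp add: cnt_0 L_neg binom_int_def)
      next
        case (Suc j)
        have b1: "cnt r j (pp k = even (Suc r)) + cnt r j (pp k = even (Suc (Suc r))) = r choose j"
          using cnt_sum[of r j] by (cases "pp k"; cases "even r") (auto simp: add.commute)
        show ?thesis
        proof (cases j)
          case 0
          have "L n (int k) = L r 1 + 1" using n2 Suc 0
            by (simp add: binom_int_def L_neg)
          also have "\<dots> = cnt r 1 (pp 1) + (r choose 0)" using IH[of 1] by simp
          also have "\<dots> = cnt n k (pp k)" using n2 Suc 0 b1
            by (simp add: cnt_step cnt_step0)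
          finally show ?thesis .
        next
          case (Suc i)
          have e: "int k - 2 = int i" "int k - 1 = int j" using \<open>k = Suc j\<close> Suc by auto
          have "L n (int k) = L r (int k) + (r choose j) + L r (int i)"
            using n2 e by (simp add: binom_int_def)
          also have "\<dots> = cnt r k (pp k) + (r choose j) + cnt r i (\<not> pp k)"
            using IH[of k] IH[of i] pp2[of i] \<open>k = Suc j\<close> Suc by simp
          also have "\<dots> = cnt n k (pp k)"
          proof -
            have "cnt r i (\<not> pp k) = cnt r i ((pp k = even (Suc (Suc r))) = even (Suc r))"
              by (cases "pp k"; cases "even r") auto
            then show ?thesis using n2 \<open>k = Suc j\<close> Suc b1
              by (simp add: cnt_step)
          qed
          finally show ?thesis .
        qed
      qed
    qed
  qed
qed

theorem mainTheorem3:
  fixes n k :: nat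
  shows "(k mod 4 = 0 \<or> k mod 4 = 3 \<longrightarrow> L n (int k) = e_cnt n k)
       \<and> (k mod 4 = 1 \<or> k mod 4 = 2 \<longrightarrow> L n (int k) = o_cnt n k)"
proof -
  have e: "e_cnt n k = cnt n k True" unfolding e_cnt_def cnt_def by simp
  have o: "o_cnt n k = cnt n k False" unfolding o_cnt_def cnt_def by simp
  show ?thesis using main[of n k] e o unfolding pp_def by auto
qed

end
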